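(* Let $(U,\mathrm{dist})$ be a metric space, $\Lambda\in\mathbb{R}_{>0}\cup\{\infty\}$, $f:U\to\mathbb{R}$ a $\Lambda$-locally Lipschitz function, and $g$ a smooth growth function on $U$. Then the function $B^*:U\to\mathbb{R}_{\ge0}$, $B^*(x)=\sup_{z\in U}\frac{\mathrm{L}_{f,\Lambda}(z)}{g(x,z)}$, is a $g$-smooth upper bound on the pointwise Lipschitz constant $\mathrm{L}_{f,\Lambda}$, i.e. (1) $B^*(x)\ge\mathrm{L}_{f,\Lambda}(x)$ for all $x\in U$, and (2) $B^*(x)\le g(x,x')\,B^*(x')$ for all $x,x'\in U$.
   Context: $f$ is $\Lambda$-locally Lipschitz if there is $K\ge0$ with $|f(x)-f(x')|\le K\,\mathrm{dist}(x,x')$ whenever $\mathrm{dist}(x,x')\le\Lambda$. For $x\in U$, $\mathrm{L}_{f,\Lambda}(x)$ is the infimum of all $K$ such that $|f(x)-f(x')|\le K\,\mathrm{dist}(x,x')$ for all $x'\in U$ with $\mathrm{dist}(x,x')\le\Lambda$. A smooth growth function is $g:U\times U\to\mathbb{R}_{>0}$ of the form $g(x,x')=g_0(\mathrm{dist}(x,x'))$, where $g_0:\mathbb{R}_{\ge0}\to\mathbb{R}_{\ge1}$ is monotonically increasing, $g_0(0)=1$, and $g_0(r_1+r_2)\le g_0(r_1)g_0(r_2)$ for all $r_1,r_2\ge0$. *)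

theory Defs
  imports "HOL-Analysis.Analysis"
begin

definition locally_lipschitz :: "'a::metric_space set \<Rightarrow> ereal \<Rightarrow> ('a \<Rightarrow> real) \<Rightarrow> bool" where
  "locally_lipschitz U \<Lambda> f \<longleftrightarrow>
     (\<exists>K\<ge>0. \<forall>x\<in>U. \<forall>x'\<in>U. ereal (dist x x') \<le> \<Lambda> \<longrightarrow> \<bar>f x - f x'\<bar> \<le> K * dist x x')"

definition pointwise_lip :: "'a::metric_space set \<Rightarrow> ereal \<Rightarrow> ('a \<Rightarrow> real) \<Rightarrow> 'a \<Rightarrow> real" where
  "pointwise_lip U \<Lambda> f x =
     Inf {K. K \<ge> 0 \<and> (\<forall>x'\<in>U. ereal (dist x x') \<le> \<Lambda> \<longrightarrow> \<bar>f x - f x'\<bar> \<le> K * dist x x')}"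

text \<open>The profile g0 of a smooth growth function g(x,x') = g0(dist x x').\<close>
definition smooth_growth_profile :: "(real \<Rightarrow> real) \<Rightarrow> bool" where
  "smooth_growth_profile g0 \<longleftrightarrow>
     mono_on {0..} g0 \<and> (\<forall>r\<ge>0. g0 r \<ge> 1) \<and> g0 0 = 1 \<and>
     (\<forall>r1\<ge>0. \<forall>r2\<ge>0. g0 (r1 + r2) \<le> g0 r1 * g0 r2)"

end

theory Submission
  imports Defs
begin

theorem mainTheorem2:
  fixes U :: "'a::metric_space set" and \<Lambda> :: ereal and f :: "'a \<Rightarrow> real"
    and g0 :: "real \<Rightarrow> real" and g :: "'a \<Rightarrow> 'a \<Rightarrow> real" and B :: "'a \<Rightarrow> real"
  assumes "\<Lambda> > 0"
    and "locally_lipschitz U \<Lambda> f"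
    and "smooth_growth_profile g0"
    and "\<And>x x'. g x x' = g0 (dist x x')"
    and "\<And>x. B x = (SUP z\<in>U. pointwise_lip U \<Lambda> f z / g x z)"
  shows "(\<forall>x\<in>U. B x \<ge> pointwise_lip U \<Lambda> f x) \<and>
         (\<forall>x\<in>U. \<forall>x'\<in>U. B x \<le> g x x' * B x')"
proof -
  obtain K where K0: "K \<ge> 0" and KL: "\<forall>x\<in>U. \<forall>x'\<in>U. ereal (dist x x') \<le> \<Lambda> \<longrightarrow> \<bar>f x - f x'\<bar> \<le> K * dist x x'"
    using assms(2) unfolding locally_lipschitz_def by blast
  have gp: "mono_on {0..} g0" "\<And>r. r \<ge> 0 \<Longrightarrow> g0 r \<ge> 1" "g0 0 = 1"
    "\<And>r1 r2. r1 \<ge> 0 \<Longrightarrow> r2 \<ge> 0 \<Longrightarrow> g0 (r1 + r2) \<le> g0 r1 * g0 r2"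
    using assms(3) unfolding smooth_growth_profile_def by auto
  have g1: "\<And>x z. g x z \<ge> 1" using gp(2) assms(4) by simp
  have Lb: "0 \<le> pointwise_lip U \<Lambda> f z \<and> pointwise_lip U \<Lambda> f z \<le> K" if "z \<in> U" for z
  proof -
    let ?S = "{K. K \<ge> 0 \<and> (\<forall>x'\<in>U. ereal (dist z x') \<le> \<Lambda> \<longrightarrow> \<bar>f z - f x'\<bar> \<le> K * dist z x')}"
    have KS: "K \<in> ?S" using K0 KL that by auto
    have bb: "bdd_below ?S" by (rule bdd_belowI[where m=0]) auto
    have "Inf ?S \<le> K" by (rule cInf_lower[OF KS bb])
    moreover have "0 \<le> Inf ?S" by (rule cInf_greatest) (use KS in auto)
    ultimately show ?thesis unfolding pointwise_lip_def by simp
  qed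
  have qb: "0 \<le> pointwise_lip U \<Lambda> f z / g x z \<and> pointwise_lip U \<Lambda> f z / g x z \<le> K" if "z \<in> U" for x z
  proof -
    have "g x z \<ge> 1" by (rule g1)
    moreover note Lb[OF that]
    ultimately have gp1: "g x z > 0" "g x z \<ge> 1" and L: "0 \<le> pointwise_lip U \<Lambda> f z" "pointwise_lip U \<Lambda> f z \<le> K" by auto
    have "K * 1 \<le> K * g x z" using K0 gp1 by (intro mult_left_mono) auto
    hence "pointwise_lip U \<Lambda> f z \<le> K * g x z" using L by simp
    hence "pointwise_lip U \<Lambda> f z / g x z \<le> K" using gp1 by (simp add: pos_divide_le_eq)
    moreover have "0 \<le> pointwise_lip U \<Lambda> f z / g x z" using gp1 L by simp
    ultimately show ?thesis by simp
  qed
  have bdd: "bdd_above ((\<lambda>z. pointwise_lip U \<Lambda> f z / g x z) ` U)" for x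
    using qb by (intro bdd_aboveI[where M=K]) auto
  have part1: "\<forall>x\<in>U. B x \<ge> pointwise_lip U \<Lambda> f x"
  proof
    fix x assume x: "x \<in> U"
    have "pointwise_lip U \<Lambda> f x / g x x \<le> B x"
      unfolding assms(5) by (rule cSUP_upper[OF x bdd])
    thus "B x \<ge> pointwise_lip U \<Lambda> f x" using assms(4) gp(3) by simp
  qed
  have part2: "\<forall>x\<in>U. \<forall>x'\<in>U. B x \<le> g x x' * B x'"
  proof (intro ballI)
    fix x x' assume x: "x \<in> U" and x': "x' \<in> U"
    show "B x \<le> g x x' * B x'"
      unfolding assms(5)[of x]
    proof (rule cSUP_least)
      show "U \<noteq> {}" using x by auto
    next
      fix z assume z: "z \<in> U"
      let ?L = "pointwise_lip U \<Lambda> f z"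
      have L0: "0 \<le> ?L" using Lb z by auto
      have "g x' z \<le> g x x' * g x z"
      proof -
        have "dist x' z \<le> dist x x' + dist x z" by (metis dist_commute dist_triangle)
        hence "g0 (dist x' z) \<le> g0 (dist x x' + dist x z)"
          using gp(1) by (intro mono_onD[OF gp(1)]) auto
        also have "\<dots> \<le> g0 (dist x x') * g0 (dist x z)" by (intro gp(4)) auto
        finally show ?thesis using assms(4) by simp
      qed
      hence "?L * g x' z \<le> ?L * (g x x' * g x z)" using L0 by (rule mult_left_mono)
      hence "?L / g x z \<le> g x x' * (?L / g x' z)"
        using g1[of x z] g1[of x' z]
        by (simp add: divide_le_eq le_divide_eq algebra_simps)
      also have "?L / g x' z \<le> B x'"
        unfolding assms(5)[of x'] by (rule cSUP_upper[OF z bdd])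
      hence "g x x' * (?L / g x' z) \<le> g x x' * B x'"
        using g1[of x x'] by (intro mult_left_mono) auto
      finally show "?L / g x z \<le> g x x' * B x'" .
    qed
  qed
  show ?thesis using part1 part2 by blast
qed

end
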